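(* Let $n,m\in\mathbb{N}$. Then $\mathcal{NN}^{\mathrm{card}}_{n,m,n+m+1}$ is universal, where $\mathrm{card}:\mathbb{C}\to\mathbb{C}$ is the complex cardioid, $\mathrm{card}(z)=\frac12\left(1+\frac{\mathrm{Re}(z)}{|z|}\right)z$ for $z\neq0$ and $\mathrm{card}(0)=0$.
   Context: For $\varrho:\mathbb{C}\to\mathbb{C}$ and $n,m,W\in\mathbb{N}$, $\mathcal{NN}^\varrho_{n,m,W}$ denotes the set of all functions $\mathbb{C}^n\to\mathbb{C}^m$ of the form $V_L\circ\varrho^{\times W}\circ V_{L-1}\circ\cdots\circ\varrho^{\times W}\circ V_1$ with arbitrary depth $L\ge 2$, where $V_1:\mathbb{C}^n\to\mathbb{C}^W$, $V_2,\dots,V_{L-1}:\mathbb{C}^W\to\mathbb{C}^W$, $V_L:\mathbb{C}^W\to\mathbb{C}^m$ are $\mathbb{C}$-affine maps ($z\mapsto Az+b$ with complex $A,b$) and $\varrho^{\times W}$ applies $\varrho$ componentwise. A class $\mathcal{F}\subseteq C(\mathbb{C}^n;\mathbb{C}^m)$ is universal if for every $g\in C(\mathbb{C}^n;\mathbb{C}^m)$, compact $K\subseteq\mathbb{C}^n$ and $\varepsilon>0$ there is $f\in\mathcal{F}$ with $\sup_{z\in K}\|f(z)-g(z)\|<\varepsilon$. *)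

theory Defs
  imports "HOL-Analysis.Analysis"
begin

definition cardioid :: "complex \<Rightarrow> complex" where
  "cardioid z = (if z = 0 then 0
                 else complex_of_real ((1 + Re z / cmod z) / 2) * z)"

definition cx_affine :: "(complex ^ 'a \<Rightarrow> complex ^ 'b) \<Rightarrow> bool" where
  "cx_affine V \<longleftrightarrow> (\<exists>(A :: complex ^ 'a ^ 'b) c. V = (\<lambda>z. A *v z + c))"

definition act_vec :: "(complex \<Rightarrow> complex) \<Rightarrow> complex ^ 'w \<Rightarrow> complex ^ 'w" where
  "act_vec \<rho> x = (\<chi> i. \<rho> (x $ i))"

inductive_set nn_hidden :: "(complex \<Rightarrow> complex) \<Rightarrow> (complex ^ 'n \<Rightarrow> complex ^ 'w) set"
  for \<rho> :: "complex \<Rightarrow> complex" where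
  first: "cx_affine (V1 :: complex ^ 'n \<Rightarrow> complex ^ 'w) \<Longrightarrow> (\<lambda>z. act_vec \<rho> (V1 z)) \<in> nn_hidden \<rho>"
| step: "h \<in> nn_hidden \<rho> \<Longrightarrow> cx_affine (V :: complex ^ 'w \<Rightarrow> complex ^ 'w)
          \<Longrightarrow> (\<lambda>z. act_vec \<rho> (V (h z))) \<in> nn_hidden \<rho>"

text \<open>NN^rho_{n,m,W}: the width W is CARD('w), all depths L >= 2.\<close>
definition NN :: "(complex \<Rightarrow> complex) \<Rightarrow> 'w::finite itself \<Rightarrow> (complex ^ 'n \<Rightarrow> complex ^ 'm) set" where
  "NN \<rho> _ = {(\<lambda>z. VL (h z)) | (VL :: complex ^ 'w \<Rightarrow> complex ^ 'm) h.
                 cx_affine VL \<and> h \<in> nn_hidden \<rho>}"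

definition universal :: "(complex ^ 'n \<Rightarrow> complex ^ 'm) set \<Rightarrow> bool" where
  "universal F \<longleftrightarrow> (\<forall>g K \<epsilon>. continuous_on UNIV g \<and> compact K \<and> \<epsilon> > 0 \<longrightarrow>
      (\<exists>f\<in>F. \<forall>z\<in>K. norm (f z - g z) < \<epsilon>))"

end

theory Submission
  imports Defs "HOL-Library.Cardinality"
begin

definition saff :: "(complex^'a::finite \<Rightarrow> complex) \<Rightarrow> bool" where
  "saff f \<longleftrightarrow> (\<exists>a b. \<forall>x. f x = (\<Sum>j\<in>UNIV. a j * x$j) + b)"

lemma saff_const: "saff (\<lambda>x. c)"
  unfolding saff_def by (rule exI[of _ "\<lambda>j. 0"]) simp

lemma saff_nth: "saff (\<lambda>x. x$i)"
  unfolding saff_def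
proof (intro exI allI)
  fix x :: "complex^'a"
  show "x$i = (\<Sum>j\<in>UNIV. (\<lambda>j. if j = i then 1 else 0) j * x$j) + 0"
    by (simp add: if_distrib[of "\<lambda>c. c * _"] cong: if_cong)
qed

lemma saff_add: "saff f \<Longrightarrow> saff g \<Longrightarrow> saff (\<lambda>x. f x + g x)"
  unfolding saff_def
proof (elim exE)
  fix a b a' b' assume f: "\<forall>x. f x = (\<Sum>j\<in>UNIV. a j * x$j) + b" and g: "\<forall>x. g x = (\<Sum>j\<in>UNIV. a' j * x$j) + b'"
  show "\<exists>a b. \<forall>x. f x + g x = (\<Sum>j\<in>UNIV. a j * x $ j) + b"
    by (rule exI[of _ "\<lambda>j. a j + a' j"], rule exI[of _ "b + b'"])
       (simp add: f g distrib_right sum.distrib)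
qed

lemma saff_mult: "saff f \<Longrightarrow> saff (\<lambda>x. c * f x)"
  unfolding saff_def
proof (elim exE)
  fix a b assume f: "\<forall>x. f x = (\<Sum>j\<in>UNIV. a j * x$j) + b"
  show "\<exists>a b. \<forall>x. c * f x = (\<Sum>j\<in>UNIV. a j * x $ j) + b"
    by (rule exI[of _ "\<lambda>j. c * a j"], rule exI[of _ "c * b"])
       (simp add: f distrib_left sum_distrib_left mult.assoc)
qed

lemma saff_diff: "saff f \<Longrightarrow> saff g \<Longrightarrow> saff (\<lambda>x. f x - g x)"
  using saff_add[of f "\<lambda>x. (-1) * g x"] saff_mult[of g "-1"] by simp

lemma saff_comp:
  assumes f: "saff f" and g: "\<And>j. saff (g j)"
  shows "saff (\<lambda>x. f (\<chi> j. g j x))"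
proof -
  obtain a b where a: "\<And>x. f x = (\<Sum>j\<in>UNIV. a j * x$j) + b" using f unfolding saff_def by blast
  have "\<forall>j. \<exists>ab. \<forall>x. g j x = (\<Sum>i\<in>UNIV. fst ab i * x$i) + snd ab"
    using g unfolding saff_def by fastforce
  then obtain ab where ab: "\<And>j x. g j x = (\<Sum>i\<in>UNIV. fst (ab j) i * x$i) + snd (ab j)"
    by metis
  show ?thesis unfolding saff_def
  proof (intro exI allI)
    fix x
    have "f (\<chi> j. g j x) = (\<Sum>j\<in>UNIV. a j * ((\<Sum>i\<in>UNIV. fst (ab j) i * x$i) + snd (ab j))) + b"
      by (simp add: a ab)
    also have "\<dots> = (\<Sum>j\<in>UNIV. \<Sum>i\<in>UNIV. a j * fst (ab j) i * x$i) + ((\<Sum>j\<in>UNIV. a j * snd (ab j)) + b)"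
      by (simp add: distrib_left sum.distrib sum_distrib_left mult.assoc)
    also have "\<dots> = (\<Sum>i\<in>UNIV. (\<Sum>j\<in>UNIV. a j * fst (ab j) i) * x$i) + ((\<Sum>j\<in>UNIV. a j * snd (ab j)) + b)"
      by (subst sum.swap) (simp add: sum_distrib_right)
    finally show "f (\<chi> j. g j x) = (\<Sum>i\<in>UNIV. (\<lambda>i. \<Sum>j\<in>UNIV. a j * fst (ab j) i) i * x$i) + ((\<Sum>j\<in>UNIV. a j * snd (ab j)) + b)" .
  qed
qed

lemma norm_le_l1_cvec: "norm (x::complex^'a) \<le> (\<Sum>i\<in>UNIV. norm (x$i))"
  by (simp add: norm_vec_def L2_set_le_sum)

lemma saff_lip:
  assumes "saff f" shows "\<exists>B\<ge>0. \<forall>x y. norm (f x - f y) \<le> B * norm (x - y)"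
proof -
  obtain a b where a: "\<And>x. f x = (\<Sum>j\<in>UNIV. a j * x$j) + b" using assms unfolding saff_def by blast
  show ?thesis
  proof (intro exI conjI allI)
    show "0 \<le> (\<Sum>j\<in>UNIV. norm (a j))" by (simp add: sum_nonneg)
    fix x y :: "complex^'a"
    have "f x - f y = (\<Sum>j\<in>UNIV. a j * (x - y)$j)"
      by (simp add: a right_diff_distrib sum_subtractf)
    also have "norm \<dots> \<le> (\<Sum>j\<in>UNIV. norm (a j) * norm (x - y))"
    proof (rule order_trans[OF norm_sum sum_mono])
      fix j show "norm (a j * (x - y)$j) \<le> norm (a j) * norm (x - y)"
      proof -
        have "norm ((x - y)$j) \<le> norm (x - y)" by (rule Finite_Cartesian_Product.norm_nth_le)
        then show ?thesis unfolding norm_mult by (simp add: mult_left_mono del: vector_minus_component)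
      qed
    qed
    finally show "norm (f x - f y) \<le> (\<Sum>j\<in>UNIV. norm (a j)) * norm (x - y)"
      by (simp add: sum_distrib_right)
  qed
qed

lemma saff_cont: "saff f \<Longrightarrow> continuous_on UNIV f"
  unfolding saff_def by (auto intro!: continuous_intros)

lemma cx_affine_saff:
  assumes "\<And>k. saff (f k)" shows "cx_affine (\<lambda>x. \<chi> k. f k x)"
proof -
  have "\<forall>k. \<exists>ab. \<forall>x. f k x = (\<Sum>i\<in>UNIV. fst ab i * x$i) + snd ab"
    using assms unfolding saff_def by fastforce
  then obtain ab where ab: "\<And>k x. f k x = (\<Sum>i\<in>UNIV. fst (ab k) i * x$i) + snd (ab k)"
    by metis
  show ?thesis unfolding cx_affine_def
    by (rule exI[of _ "\<chi> k i. fst (ab k) i"], rule exI[of _ "\<chi> k. snd (ab k)"])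
       (auto simp: vec_eq_iff matrix_vector_mult_def ab)
qed

lemma saff_of_cx_affine:
  assumes "cx_affine U" shows "saff (\<lambda>x. U x $ k)"
proof -
  obtain A c where "U = (\<lambda>z. A *v z + c)" using assms unfolding cx_affine_def by blast
  then show ?thesis unfolding saff_def
    by (intro exI[of _ "\<lambda>j. A$k$j"] exI[of _ "c$k"]) (simp add: matrix_vector_mult_def)
qed

lemma cardioid_alt: "cardioid z = (z + of_real (Re z) * sgn z) / 2"
  by (cases "z = 0") (auto simp: cardioid_def sgn_div_norm scaleR_conv_of_real field_simps)

lemma cont_cardioid: "continuous_on UNIV cardioid"
proof -
  have "isCont cardioid z" for z
  proof (cases "z = 0")
    case False
    have "isCont (\<lambda>z. (z + of_real (Re z) * sgn z) / 2) z"
      using False by (intro continuous_intros) (auto simp: sgn_div_norm intro!: continuous_intros)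
    then show ?thesis unfolding cardioid_alt[abs_def] .
  next
    case True
    have "(cardioid \<longlongrightarrow> 0) (at 0)"
    proof (rule tendsto_norm_zero_cancel, rule tendsto_sandwich[of "\<lambda>_. 0" _ _ "\<lambda>x. norm x"])
      show "\<forall>\<^sub>F x in at 0. 0 \<le> norm (cardioid x)" by simp
      show "\<forall>\<^sub>F x in at 0. norm (cardioid x) \<le> norm x"
      proof (rule always_eventually, rule allI)
        fix x :: complex
        have "norm (cardioid x) \<le> (norm x + \<bar>Re x\<bar> * norm (sgn x)) / 2"
          unfolding cardioid_alt by (simp add: norm_divide norm_mult order_trans[OF norm_triangle_ineq] norm_of_real)
        also have "\<dots> \<le> norm x"
          using abs_Re_le_cmod[of x] by (cases "x = 0") (auto simp: norm_sgn)
        finally show "norm (cardioid x) \<le> norm x" .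
      qed
      show "((\<lambda>_. 0::real) \<longlongrightarrow> 0) (at 0)" by simp
      show "((\<lambda>x::complex. norm x) \<longlongrightarrow> 0) (at 0)" by (intro tendsto_eq_intros) auto
    qed
    moreover have "cardioid 0 = 0" by (simp add: cardioid_def)
    ultimately show ?thesis using True by (simp add: isCont_def)
  qed
  then show ?thesis by (simp add: continuous_at_imp_continuous_on)
qed

lemma card_diff:
  assumes "Re w > 0"
  shows "cardioid w - w = - of_real ((Im w)^2 / (2 * cmod w * (cmod w + Re w))) * w"
proof -
  have w0: "w \<noteq> 0" using assms by auto
  have r: "cmod w > 0" using w0 by simp
  have rr: "cmod w + Re w > 0" using assms r by linarith
  have sq: "(cmod w)^2 = (Re w)^2 + (Im w)^2" by (simp add: cmod_power2)
  have e: "(Re w / cmod w - 1) / 2 = - ((Im w)^2 / (2 * cmod w * (cmod w + Re w)))"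
  proof -
    have h: "(Re w - cmod w) * (cmod w + Re w) = -((Im w)^2)" using sq by (simp add: algebra_simps power2_eq_square)
    have "(Re w / cmod w - 1) / 2 = (Re w - cmod w) / (2 * cmod w)"
      using r by (simp add: field_simps)
    also have "\<dots> = (Re w - cmod w) * (cmod w + Re w) / (2 * cmod w * (cmod w + Re w))"
      using rr by simp
    finally have "(Re w / cmod w - 1) / 2 = (Re w - cmod w) * (cmod w + Re w) / (2 * cmod w * (cmod w + Re w))" .
    then show ?thesis using h by simp
  qed
  have "cardioid w - w = of_real ((Re w / cmod w - 1) / 2) * w"
    using w0 by (simp add: cardioid_def algebra_simps add_divide_distrib diff_divide_distrib)
  then show ?thesis by (simp add: e)
qed

lemma card_shift_bound:
  assumes C: "C > 0" and v: "2 * cmod v \<le> C"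
  shows "cmod (cardioid (of_real C + v) - (of_real C + v)) \<le> (cmod v)^2 / C"
proof -
  define w where "w = of_real C + v"
  have X: "Re w \<ge> C / 2" using abs_Re_le_cmod[of v] v by (simp add: w_def)
  have X0: "Re w > 0" using X C by linarith
  have r: "cmod w \<ge> Re w" by (rule complex_Re_le_cmod)
  have r0: "cmod w > 0" using r X0 by linarith
  have "cmod (cardioid w - w) = (Im w)^2 / (2 * cmod w * (cmod w + Re w)) * cmod w"
    unfolding card_diff[OF X0] norm_minus_cancel norm_mult norm_of_real
    using r0 X0 by (simp add: abs_of_nonneg)
  also have "\<dots> = (Im w)^2 / (2 * (cmod w + Re w))"
  proof -
    have "cmod w + Re w > 0" using r0 X0 by linarith
    then have "cmod w * (2 * (cmod w + Re w)) \<noteq> 0" using r0 by simp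
    then have "(Im w)^2 * cmod w / (cmod w * (2 * (cmod w + Re w))) = (Im w)^2 / (2 * (cmod w + Re w))"
      using r0 by simp
    then show ?thesis by (simp add: mult.commute mult.left_commute)
  qed
  also have "\<dots> \<le> (cmod v)^2 / C"
  proof (rule frac_le[of "(cmod v)^2" "(Im w)^2" C "2 * (cmod w + Re w)"])
    show "(Im w)^2 \<le> (cmod v)^2" using power_mono[OF abs_Im_le_cmod[of v], of 2]
      by (simp add: w_def)
    show "0 < C" by fact
    show "C \<le> 2 * (cmod w + Re w)" using X r C by (simp add: field_simps)
  qed simp
  finally show ?thesis by (simp add: w_def)
qed

lemma gadget_bound:
  assumes d: "d > 0" and ds: "d * cmod s \<le> 1/2"
  shows "cmod (-4 * (cardioid (1 + of_real d * s) - 1 - of_real d * s) / (of_real d)^2 - of_real ((Im s)^2))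
          \<le> 16 * d * (cmod s)^3"
proof -
  define w where "w = 1 + of_real d * s"
  define a where "a = d * cmod s"
  have a0: "a \<ge> 0" using d by (simp add: a_def)
  have ua: "cmod (w - 1) = a" using d by (simp add: w_def a_def norm_mult)
  have Xl: "Re w \<ge> 1 - a" using abs_Re_le_cmod[of "w - 1"] ua by simp
  have Xu: "Re w \<le> 1 + a" using abs_Re_le_cmod[of "w - 1"] ua by simp
  have rl: "cmod w \<ge> 1 - a" using norm_triangle_ineq2[of 1 "1 - w"] ua by (simp add: norm_minus_commute)
  have ru: "cmod w \<le> 1 + a" using norm_triangle_ineq[of 1 "w - 1"] ua by simp
  have X0: "Re w > 0" using Xl ds a_def by linarith
  have r0: "cmod w > 0" using rl ds a_def by linarith
  define q where "q = cmod w * (cmod w + Re w)"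
  have a12: "a \<le> 1/2" using ds a_def by simp
  have ql: "q \<ge> 2 * (1 - a)^2"
  proof -
    have "(1 - a) * ((1 - a) + (1 - a)) \<le> cmod w * (cmod w + Re w)"
      using rl Xl a12 by (intro mult_mono add_mono) auto
    then show ?thesis by (simp add: q_def power2_eq_square algebra_simps)
  qed
  have qu: "q \<le> 2 * (1 + a)^2"
  proof -
    have "cmod w * (cmod w + Re w) \<le> (1 + a) * ((1 + a) + (1 + a))"
      using ru Xu a0 X0 by (intro mult_mono add_mono) auto
    then show ?thesis by (simp add: q_def power2_eq_square algebra_simps)
  qed
  have q12: "q \<ge> 1/2"
  proof -
    have "(1/2)^2 \<le> (1 - a)^2" using a12 by (intro power_mono) auto
    then have "1/4 \<le> (1 - a)^2" by (simp add: power2_eq_square)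
    then show ?thesis using ql by linarith
  qed
  have aa: "a * a \<le> a * (1/2)" using a12 a0 by (intro mult_left_mono) auto
  have q2: "\<bar>2 - q\<bar> \<le> 5 * a"
  proof -
    have e1: "2 * (1 - a)^2 = 2 - 4 * a + 2 * (a * a)" by (simp add: power2_eq_square algebra_simps)
    have e2: "2 * (1 + a)^2 = 2 + 4 * a + 2 * (a * a)" by (simp add: power2_eq_square algebra_simps)
    show ?thesis unfolding abs_le_iff using ql qu e1 e2 aa a0 mult_nonneg_nonneg[OF a0 a0] by (intro conjI; linarith)
  qed
  have Imw: "Im w = d * Im s" by (simp add: w_def)
  have E: "-4 * (cardioid w - w) / (of_real d)^2 - of_real ((Im s)^2)
      = of_real ((Im s)^2) * ((2 * w - of_real q) / of_real q)"
  proof -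
    have qp: "q > 0" using q12 by linarith
    have re: "4 * ((d * Im s)^2 / (2 * cmod w * (cmod w + Re w))) / d^2 = 2 * (Im s)^2 / q"
    proof -
      have "2 * cmod w * (cmod w + Re w) = 2 * q" by (simp add: q_def)
      moreover have "4 * ((d * Im s)^2 / (2 * q)) / d^2 = 2 * (Im s)^2 / q"
        using d qp by (simp add: field_simps power2_eq_square)
      ultimately show ?thesis by simp
    qed
    have "-4 * (cardioid w - w) / (of_real d)^2 = of_real (4 * ((d * Im s)^2 / (2 * cmod w * (cmod w + Re w))) / d^2) * w"
      unfolding card_diff[OF X0] Imw by simp
    also have "\<dots> = of_real ((Im s)^2) * (2 * w / of_real q)"
      unfolding re by simp
    finally have "-4 * (cardioid w - w) / (of_real d)^2 = of_real ((Im s)^2) * (2 * w / of_real q)" .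
    moreover have "of_real ((Im s)^2) * (2 * w / of_real q) - of_real ((Im s)^2)
       = of_real ((Im s)^2) * ((2 * w - of_real q) / of_real q)"
      using qp by (simp add: field_simps)
    ultimately show ?thesis by simp
  qed
  have "cmod (2 * w - of_real q) \<le> cmod (2 * w - 2) + cmod (2 - of_real q)"
    by (rule order_trans[OF _ norm_triangle_ineq]) simp
  also have "\<dots> \<le> 2 * a + 5 * a"
  proof (rule add_mono)
    have "cmod (2 * w - 2) = 2 * cmod (w - 1)"
      by (metis norm_mult norm_numeral right_diff_distrib mult.right_neutral)
    then show "cmod (2 * w - 2) \<le> 2 * a" using ua by simp
    have "cmod (2 - of_real q) = \<bar>2 - q\<bar>" by (metis norm_of_real of_real_diff of_real_numeral)
    then show "cmod (2 - of_real q) \<le> 5 * a" using q2 by simp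
  qed
  finally have n1: "cmod (2 * w - of_real q) \<le> 7 * a" by simp
  have n2: "cmod ((2 * w - of_real q) / of_real q) \<le> 14 * a"
  proof -
    have "cmod ((2 * w - of_real q) / of_real q) = cmod (2 * w - of_real q) / q"
      using q12 by (simp add: norm_divide)
    also have "\<dots> \<le> (7 * a) / (1/2)" using n1 q12 a0
      by (intro frac_le) auto
    finally show ?thesis by simp
  qed
  have "cmod (-4 * (cardioid w - w) / (of_real d)^2 - of_real ((Im s)^2)) \<le> (Im s)^2 * (14 * a)"
    unfolding E norm_mult norm_of_real using n2 by (simp add: mult_left_mono)
  also have "\<dots> \<le> (cmod s)^2 * (14 * a)"
    using a0 power_mono[OF abs_Im_le_cmod[of s], of 2] by (intro mult_right_mono) auto
  also have "\<dots> \<le> 16 * d * (cmod s)^3"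
    using d by (simp add: a_def power3_eq_cube power2_eq_square)
  finally show ?thesis by (simp add: w_def diff_diff_eq)
qed

lemma aff_comp:
  assumes "cx_affine V" "cx_affine W" shows "cx_affine (\<lambda>x. V (W x))"
proof -
  obtain A c where V: "V = (\<lambda>z. A *v z + c)" using assms(1) unfolding cx_affine_def by blast
  obtain B d where W: "W = (\<lambda>z. B *v z + d)" using assms(2) unfolding cx_affine_def by blast
  show ?thesis unfolding cx_affine_def V W
    by (rule exI[of _ "A ** B"], rule exI[of _ "A *v d + c"])
       (simp add: matrix_vector_right_distrib matrix_vector_mul_assoc add.assoc)
qed

lemma hidden_precomp:
  assumes "h \<in> nn_hidden \<rho>" "cx_affine V0"
  shows "(\<lambda>z. h (V0 z)) \<in> nn_hidden \<rho>"
  using assms(1)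
proof induction
  case (first V1)
  show ?case using nn_hidden.first[OF aff_comp[OF first assms(2)]] .
next
  case (step h V)
  show ?case using nn_hidden.step[OF step(3) step(2)] .
qed

lemma hidden_comp:
  fixes h2 h1 U :: "complex^'w::finite \<Rightarrow> complex^'w"
  assumes "h2 \<in> nn_hidden \<rho>" "h1 \<in> nn_hidden \<rho>" "cx_affine U"
  shows "(\<lambda>x. h2 (U (h1 x))) \<in> nn_hidden \<rho>"
  using assms(1)
proof induction
  case (first V1)
  show ?case using nn_hidden.step[OF assms(2) aff_comp[OF first assms(3)]] .
next
  case (step h V)
  show ?case using nn_hidden.step[OF step(3) step(2)] .
qed

definition apx :: "(complex^'w::finite \<Rightarrow> complex^'w) \<Rightarrow> bool" where
  "apx G \<longleftrightarrow> continuous_on UNIV G \<and> (\<forall>K e. compact K \<and> e > 0 \<longrightarrow>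
     (\<exists>U (h :: complex^'w \<Rightarrow> complex^'w). cx_affine U \<and> h \<in> nn_hidden cardioid \<and> (\<forall>x\<in>K. norm (U (h x) - G x) < e)))"

lemma apx_comp:
  assumes F: "apx F" and G: "apx G"
  shows "apx (\<lambda>x. G (F x))"
  unfolding apx_def
proof (intro conjI allI impI)
  have cF: "continuous_on UNIV F" and cG: "continuous_on UNIV G" using F G by (auto simp: apx_def)
  show "continuous_on UNIV (\<lambda>x. G (F x))" using continuous_on_compose2[OF cG cF] by simp
  fix K :: "(complex^'a) set" and e :: real
  assume Ke: "compact K \<and> e > 0"
  define L where "L = {x + y | x y. x \<in> F ` K \<and> y \<in> cball (0::complex^'a) 1}"
  have cL: "compact L" unfolding L_def
    by (rule compact_sums) (use Ke cF in \<open>auto intro: compact_continuous_image continuous_on_subset\<close>)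
  have "uniformly_continuous_on L G"
    by (rule compact_uniformly_continuous[OF continuous_on_subset[OF cG] cL]) simp
  moreover have e2: "e/2 > 0" using Ke by simp
  ultimately obtain d where d: "d > 0" and dG: "\<And>x x'. x \<in> L \<Longrightarrow> x' \<in> L \<Longrightarrow> dist x' x < d \<Longrightarrow> dist (G x') (G x) < e/2"
    unfolding uniformly_continuous_on_def by blast
  have "min d 1 > 0" using d by simp
  then have "\<exists>U (h :: complex^'a \<Rightarrow> complex^'a). cx_affine U \<and> h \<in> nn_hidden cardioid \<and> (\<forall>x\<in>K. norm (U (h x) - F x) < min d 1)"
    using F Ke unfolding apx_def by blast
  then obtain U1 and h1 :: "complex^'a \<Rightarrow> complex^'a" where U1: "cx_affine U1" "h1 \<in> nn_hidden cardioid"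
    and a1: "\<And>x. x \<in> K \<Longrightarrow> norm (U1 (h1 x) - F x) < min d 1"
    by blast
  have "\<exists>U (h :: complex^'a \<Rightarrow> complex^'a). cx_affine U \<and> h \<in> nn_hidden cardioid \<and> (\<forall>y\<in>L. norm (U (h y) - G y) < e/2)"
    using G e2 cL unfolding apx_def by blast
  then obtain U2 and h2 :: "complex^'a \<Rightarrow> complex^'a" where U2: "cx_affine U2" "h2 \<in> nn_hidden cardioid"
    and a2: "\<And>y. y \<in> L \<Longrightarrow> norm (U2 (h2 y) - G y) < e/2"
    by blast
  show "\<exists>U (h :: complex^'a \<Rightarrow> complex^'a). cx_affine U \<and> h \<in> nn_hidden cardioid \<and> (\<forall>x\<in>K. norm (U (h x) - G (F x)) < e)"
  proof (intro exI conjI ballI)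
    show "cx_affine U2" by fact
    show "(\<lambda>x. h2 (U1 (h1 x))) \<in> nn_hidden cardioid" by (rule hidden_comp[OF U2(2) U1(2) U1(1)])
    fix x assume x: "x \<in> K"
    have FL: "F x \<in> L" unfolding L_def
      by (rule CollectI, rule exI[of _ "F x"], rule exI[of _ 0]) (use x in auto)
    have yL: "U1 (h1 x) \<in> L" unfolding L_def
      by (rule CollectI, rule exI[of _ "F x"], rule exI[of _ "U1 (h1 x) - F x"]) (use x a1[OF x] in \<open>auto simp: dist_norm norm_minus_commute\<close>)
    have "norm (U2 (h2 (U1 (h1 x))) - G (F x)) \<le> norm (U2 (h2 (U1 (h1 x))) - G (U1 (h1 x))) + norm (G (U1 (h1 x)) - G (F x))"
      using norm_triangle_ineq[of "U2 (h2 (U1 (h1 x))) - G (U1 (h1 x))" "G (U1 (h1 x)) - G (F x)"] by simp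
    also have "\<dots> < e/2 + e/2"
      using a2[OF yL] dG[OF FL yL] a1[OF x] by (intro add_strict_mono) (auto simp: dist_norm)
    finally show "norm (U2 (h2 (U1 (h1 x))) - G (F x)) < e" by simp
  qed
qed

lemma apx_limit:
  assumes c: "continuous_on UNIV G"
    and a: "\<And>K e. compact K \<Longrightarrow> e > 0 \<Longrightarrow> \<exists>G'. apx G' \<and> (\<forall>x\<in>K. norm (G' x - G x) < e)"
  shows "apx G"
  unfolding apx_def
proof (intro conjI allI impI c)
  fix K :: "(complex^'a) set" and e :: real
  assume Ke: "compact K \<and> e > 0"
  then obtain G' where G': "apx G'" and g1: "\<And>x. x \<in> K \<Longrightarrow> norm (G' x - G x) < e/2"
    using a[of K "e/2"] by auto
  have e2: "e/2 > 0" using Ke by simp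
  have "\<exists>U (h :: complex^'a \<Rightarrow> complex^'a). cx_affine U \<and> h \<in> nn_hidden cardioid \<and> (\<forall>x\<in>K. norm (U (h x) - G' x) < e/2)"
    using G' Ke e2 unfolding apx_def by blast
  then obtain U and h :: "complex^'a \<Rightarrow> complex^'a" where Uh: "cx_affine U" "h \<in> nn_hidden cardioid" and g2: "\<And>x. x \<in> K \<Longrightarrow> norm (U (h x) - G' x) < e/2"
    by blast
  show "\<exists>U (h :: complex^'a \<Rightarrow> complex^'a). cx_affine U \<and> h \<in> nn_hidden cardioid \<and> (\<forall>x\<in>K. norm (U (h x) - G x) < e)"
  proof (rule exI[of _ U], rule exI[of _ h], intro conjI ballI Uh)
    fix x assume x: "x \<in> K"
    have "norm (U (h x) - G x) \<le> norm (U (h x) - G' x) + norm (G' x - G x)"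
      using norm_triangle_ineq[of "U (h x) - G' x" "G' x - G x"] by simp
    also have "\<dots> < e/2 + e/2" using g1[OF x] g2[OF x] by simp
    finally show "norm (U (h x) - G x) < e" by simp
  qed
qed

lemma cx_affine_cont: "cx_affine (U :: complex^'a::finite \<Rightarrow> complex^'b::finite) \<Longrightarrow> continuous_on UNIV U"
proof -
  assume "cx_affine U"
  then have "\<And>k. continuous_on UNIV (\<lambda>x. U x $ k)" by (intro saff_cont saff_of_cx_affine)
  then have "continuous_on UNIV (\<lambda>x. \<chi> k. U x $ k)" by (intro continuous_on_vec_lambda)
  then show ?thesis by simp
qed

lemma act_cont: "continuous_on UNIV (act_vec cardioid :: complex^'a::finite \<Rightarrow> complex^'a)"
  unfolding act_vec_def
  by (intro continuous_on_vec_lambda continuous_on_compose2[OF cont_cardioid] continuous_intros) auto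

lemma apx_one:
  fixes U V :: "complex^'w::finite \<Rightarrow> complex^'w"
  assumes U: "cx_affine U" and V: "cx_affine V"
  shows "apx (\<lambda>x. U (act_vec cardioid (V x)))"
  unfolding apx_def
proof (intro conjI allI impI)
  show "continuous_on UNIV (\<lambda>x. U (act_vec cardioid (V x)))"
    by (intro continuous_on_compose2[OF cx_affine_cont[OF U]] continuous_on_compose2[OF act_cont]
        cx_affine_cont[OF V]) auto
  fix K :: "(complex^'w) set" and e :: real
  assume "compact K \<and> e > 0"
  then show "\<exists>U' (h :: complex^'w \<Rightarrow> complex^'w). cx_affine U' \<and> h \<in> nn_hidden cardioid \<and> (\<forall>x\<in>K. norm (U' (h x) - U (act_vec cardioid (V x))) < e)"
    by (intro exI[of _ U] exI[of _ "\<lambda>x. act_vec cardioid (V x)"]) (auto simp: U nn_hidden.first[OF V])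
qed

lemma apx_gen:
  fixes P :: "'w::finite set" and v u :: "'w \<Rightarrow> complex^'w \<Rightarrow> complex"
  assumes v: "\<And>j. saff (v j)" and u: "\<And>k. saff (u k)"
  shows "apx (\<lambda>x. \<chi> k. u k (\<chi> j. if j \<in> P then cardioid (v j x) else x$j))"
proof (rule apx_limit)
  define ex where "ex = (\<lambda>x. \<chi> j. if j \<in> P then cardioid (v j x) else (x::complex^'w)$j)"
  have cex: "continuous_on UNIV ex" unfolding ex_def
  proof (intro continuous_on_vec_lambda)
    fix j show "continuous_on UNIV (\<lambda>x::complex^'w. if j \<in> P then cardioid (v j x) else x $ j)"
      by (cases "j \<in> P") (auto intro!: continuous_on_compose2[OF cont_cardioid saff_cont[OF v]] continuous_intros)
  qed
  show "continuous_on UNIV (\<lambda>x. \<chi> k. u k (\<chi> j. if j \<in> P then cardioid (v j x) else x$j))"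
  proof (intro continuous_on_vec_lambda)
    fix k show "continuous_on UNIV (\<lambda>x. u k (\<chi> j. if j \<in> P then cardioid (v j x) else x$j))"
      using continuous_on_compose2[OF saff_cont[OF u[of k]] cex] unfolding ex_def by auto
  qed
  fix K :: "(complex^'w) set" and e :: real
  assume K: "compact K" and e: "e > 0"
  obtain M where M: "M > 0" "\<And>x. x \<in> K \<Longrightarrow> norm x \<le> M"
    using compact_imp_bounded[OF K] unfolding bounded_pos by blast
  have "\<forall>k. \<exists>B\<ge>0. \<forall>x y. norm (u k x - u k y) \<le> B * norm (x - y)" using saff_lip[OF u] by blast
  then obtain B where B: "\<And>k. B k \<ge> 0" "\<And>k x y. norm (u k x - u k y) \<le> B k * norm (x - y)" by metis
  define SB where "SB = (\<Sum>k\<in>UNIV. B k)"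
  define N where "N = real CARD('w)"
  define C where "C = 2 * M + SB * N * M^2 / e + 1"
  have SB0: "SB \<ge> 0" unfolding SB_def using B(1) by (simp add: sum_nonneg)
  have N0: "N \<ge> 0" unfolding N_def by simp
  have Q0: "SB * N * M^2 / e \<ge> 0" using SB0 N0 e by simp
  have C0: "C > 0" and C2: "2 * M \<le> C" using Q0 M by (auto simp: C_def)
  define Vm where "Vm = (\<lambda>x::complex^'w. \<chi> j. if j \<in> P then v j x else x$j + of_real C)"
  define Um where "Um = (\<lambda>y::complex^'w. \<chi> k. u k (\<chi> j. if j \<in> P then y$j else y$j - of_real C))"
  have aV: "cx_affine Vm" unfolding Vm_def
  proof (intro cx_affine_saff)
    fix j show "saff (\<lambda>x::complex^'w. if j \<in> P then v j x else x$j + of_real C)"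
      by (cases "j \<in> P") (simp_all add: v saff_add saff_nth saff_const)
  qed
  have aU: "cx_affine Um" unfolding Um_def
  proof (intro cx_affine_saff saff_comp[OF u])
    fix j show "saff (\<lambda>x::complex^'w. if j \<in> P then x$j else x$j - of_real C)"
      by (cases "j \<in> P") (simp_all add: saff_diff saff_nth saff_const)
  qed
  define G' where "G' = (\<lambda>x. Um (act_vec cardioid (Vm x)))"
  show "\<exists>G'. apx G' \<and> (\<forall>x\<in>K. norm (G' x - (\<chi> k. u k (\<chi> j. if j \<in> P then cardioid (v j x) else x$j))) < e)"
  proof (intro exI conjI ballI)
    show "apx G'" unfolding G'_def by (rule apx_one[OF aU aV])
    fix x assume x: "x \<in> K"
    define a where "a = (\<chi> j. if j \<in> P then cardioid (v j x) else cardioid (x$j + of_real C) - of_real C)"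
    have G'x: "G' x = (\<chi> k. u k a)"
      unfolding G'_def Um_def Vm_def a_def act_vec_def by (simp cong: if_cong)
    have ab: "norm (a - ex x) \<le> N * (M^2 / C)"
    proof -
      have "norm (a - ex x) \<le> (\<Sum>j\<in>UNIV. norm ((a - ex x)$j))" by (rule norm_le_l1_cvec)
      also have "\<dots> \<le> (\<Sum>j\<in>(UNIV::'w set). M^2 / C)"
      proof (rule sum_mono)
        fix j :: 'w
        show "norm ((a - ex x)$j) \<le> M^2 / C"
        proof (cases "j \<in> P")
          case True then show ?thesis using C0 by (simp add: a_def ex_def)
        next
          case False
          have xj: "norm (x$j) \<le> M" using M(2)[OF x] Finite_Cartesian_Product.norm_nth_le[of x j] by linarith
          have "norm ((a - ex x)$j) = norm (cardioid (of_real C + x$j) - (of_real C + x$j))"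
            using False by (simp add: a_def ex_def add.commute diff_diff_eq)
          also have "\<dots> \<le> (norm (x$j))^2 / C" by (rule card_shift_bound[OF C0]) (use xj C2 in linarith)
          also have "\<dots> \<le> M^2 / C" using xj C0 by (intro divide_right_mono power_mono) auto
          finally show ?thesis .
        qed
      qed
      also have "\<dots> = N * (M^2 / C)" by (simp add: N_def)
      finally show ?thesis .
    qed
    have "norm (G' x - (\<chi> k. u k (ex x))) \<le> (\<Sum>k\<in>UNIV. norm ((G' x - (\<chi> k. u k (ex x)))$k))"
      by (rule norm_le_l1_cvec)
    also have "\<dots> \<le> (\<Sum>k\<in>UNIV. B k * (N * (M^2 / C)))"
    proof (rule sum_mono)
      fix k
      have "norm ((G' x - (\<chi> k. u k (ex x)))$k) = norm (u k a - u k (ex x))" by (simp add: G'x)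
      also have "\<dots> \<le> B k * norm (a - ex x)" by (rule B(2))
      also have "\<dots> \<le> B k * (N * (M^2 / C))" using ab B(1) by (rule mult_left_mono)
      finally show "norm ((G' x - (\<chi> k. u k (ex x)))$k) \<le> B k * (N * (M^2 / C))" .
    qed
    also have "\<dots> = SB * N * M^2 / C" by (simp add: SB_def sum_distrib_right sum_divide_distrib mult.assoc)
    also have "\<dots> < e"
    proof -
      have "SB * N * M^2 < e * C"
        using e M Q0 by (simp add: C_def field_simps) (smt (verit) mult_pos_pos)
      then show ?thesis using C0 by (simp add: divide_less_eq)
    qed
    finally show "norm (G' x - (\<chi> k. u k (\<chi> j. if j \<in> P then cardioid (v j x) else x$j))) < e"
      unfolding ex_def .
  qed
qed

definition upd :: "complex^'w::finite \<Rightarrow> 'w \<Rightarrow> complex \<Rightarrow> complex^'w" where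
  "upd x p c = (\<chi> k. if k = p then c else x$k)"

definition indep :: "'w::finite \<Rightarrow> (complex^'w \<Rightarrow> complex) \<Rightarrow> bool" where
  "indep p f \<longleftrightarrow> (\<forall>x c. f (upd x p c) = f x)"

lemma upd_nth[simp]: "upd x p c $ k = (if k = p then c else x$k)"
  by (simp add: upd_def)

lemma apx_affine: "cx_affine (U :: complex^'w::finite \<Rightarrow> complex^'w) \<Longrightarrow> apx U"
  using apx_gen[of "\<lambda>j x. 0" "\<lambda>k y. U y $ k" "{}"]
  by (simp add: saff_const saff_of_cx_affine)

lemma upd_cont: "continuous_on UNIV f \<Longrightarrow> continuous_on UNIV (\<lambda>x. upd x p (f x))"
  unfolding upd_def
proof (intro continuous_on_vec_lambda)
  fix k assume "continuous_on UNIV f"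
  then show "continuous_on UNIV (\<lambda>x::complex^'a. if k = p then f x else x $ k)"
    by (cases "k = p") (auto intro: continuous_intros)
qed

lemma norm_upd_diff: "norm (upd x p a - upd x p b) \<le> norm (a - b)"
proof -
  have "norm (upd x p a - upd x p b) \<le> (\<Sum>j\<in>UNIV. norm ((upd x p a - upd x p b)$j))"
    by (rule norm_le_l1_cvec)
  also have "\<dots> = (\<Sum>j\<in>UNIV. if j = p then norm (a - b) else 0)"
    by (intro sum.cong) auto
  finally show ?thesis by simp
qed

lemma apx_gdelta:
  fixes \<alpha> t :: "complex^'w::finite \<Rightarrow> complex"
  assumes sa: "saff \<alpha>" and st: "saff t" and ia: "indep p \<alpha>" and it: "indep p t"
  shows "apx (\<lambda>x. upd x p (\<alpha> x + (c * (-4 / (of_real d)^2)) * (cardioid (1 + of_real d * t x) - 1 - of_real d * t x)))"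
proof -
  define u where "u = (\<lambda>k (y::complex^'w). if k = p then \<alpha> y + (c * (-4 / (of_real d)^2)) * (y$p - 1 - of_real d * t y) else y$k)"
  have su: "saff (u k)" for k
  proof (cases "k = p")
    case True
    then have "u k = (\<lambda>y. \<alpha> y + (c * (-4 / (of_real d)^2)) * (y$p - 1 - of_real d * t y))"
      by (simp add: u_def)
    moreover have "saff (\<lambda>y. \<alpha> y + (c * (-4 / (of_real d)^2)) * (y$p - 1 - of_real d * t y))"
      by (rule saff_add[OF sa saff_mult[OF saff_diff[OF saff_diff[OF saff_nth saff_const] saff_mult[OF st]]]])
    ultimately show ?thesis by simp
  next
    case False
    then have "u k = (\<lambda>y. y$k)" by (simp add: u_def)
    then show ?thesis by (simp add: saff_nth)
  qed
  have sv: "saff (\<lambda>x. 1 + of_real d * t x)" by (intro saff_add saff_const saff_mult st)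
  have "apx (\<lambda>x. \<chi> k. u k (\<chi> j. if j \<in> {p} then cardioid ((\<lambda>j x. 1 + of_real d * t x) j x) else x$j))"
    by (rule apx_gen) (use su sv in auto)
  moreover have "(\<lambda>x. \<chi> k. u k (\<chi> j. if j \<in> {p} then cardioid ((\<lambda>j x. 1 + of_real d * t x) j x) else x$j))
     = (\<lambda>x. upd x p (\<alpha> x + (c * (-4 / (of_real d)^2)) * (cardioid (1 + of_real d * t x) - 1 - of_real d * t x)))"
  proof (rule ext)
    fix x :: "complex^'w"
    have e: "(\<chi> j. if j \<in> {p} then cardioid (1 + of_real d * t x) else x$j) = upd x p (cardioid (1 + of_real d * t x))"
      by (simp add: upd_def)
    have a: "\<alpha> (upd x p y) = \<alpha> x" "t (upd x p y) = t x" for y using ia it by (auto simp: indep_def)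
    show "(\<chi> k. u k (\<chi> j. if j \<in> {p} then cardioid ((\<lambda>j x. 1 + of_real d * t x) j x) else x$j))
       = upd x p (\<alpha> x + (c * (-4 / (of_real d)^2)) * (cardioid (1 + of_real d * t x) - 1 - of_real d * t x))"
      unfolding e by (simp add: vec_eq_iff u_def a)
  qed
  ultimately show ?thesis by simp
qed

lemma saff_bound:
  assumes "saff t" "compact K"
  obtains M where "M > 0" "\<And>x. x \<in> K \<Longrightarrow> norm (t x) \<le> M"
proof -
  have "continuous_on K t" using continuous_on_subset[OF saff_cont[OF assms(1)]] by simp
  then have "compact (t ` K)" by (rule compact_continuous_image[OF _ assms(2)])
  then have "bounded (t ` K)" by (rule compact_imp_bounded)
  then obtain M where "M > 0" "\<And>y. y \<in> t ` K \<Longrightarrow> norm y \<le> M"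
    unfolding bounded_pos by blast
  then show ?thesis using that by blast
qed

lemma gen_id: "a + (c * (-4 / D)) * X - (a + c * I) = c * (-4 * X / D - (I::complex))"
  by (simp add: right_diff_distrib)

lemma apx_Q:
  fixes \<alpha> t :: "complex^'w::finite \<Rightarrow> complex"
  assumes sa: "saff \<alpha>" and st: "saff t" and ia: "indep p \<alpha>" and it: "indep p t"
  shows "apx (\<lambda>x. upd x p (\<alpha> x + c * of_real ((Im (t x))^2)))"
proof (rule apx_limit)
  show "continuous_on UNIV (\<lambda>x. upd x p (\<alpha> x + c * of_real ((Im (t x))^2)))"
    using saff_cont[OF st] saff_cont[OF sa] by (intro upd_cont continuous_intros)
  fix K :: "(complex^'w) set" and e :: real
  assume K: "compact K" and e: "e > 0"
  obtain M where M: "M > 0" "\<And>x. x \<in> K \<Longrightarrow> norm (t x) \<le> M" using saff_bound[OF st K] by blast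
  define d where "d = min (1 / (2 * M)) (e / (2 * (16 * (cmod c + 1) * M^3)))"
  have "0 < e / (2 * (16 * (cmod c + 1) * M^3))" using M e
    by (intro divide_pos_pos mult_pos_pos) (auto simp: add_nonneg_pos)
  then have d0: "d > 0" using M by (simp add: d_def)
  have dM: "d * M \<le> 1/2"
  proof -
    have "d \<le> 1 / (2 * M)" by (simp add: d_def)
    then have "d * M \<le> 1 / (2 * M) * M" using M by (intro mult_right_mono) auto
    then show ?thesis using M by simp
  qed
  have dM2: "(cmod c + 1) * (16 * d * M^3) \<le> e / 2"
  proof -
    have "d \<le> e / (2 * (16 * (cmod c + 1) * M^3))" by (simp add: d_def)
    moreover have "0 < 2 * (16 * (cmod c + 1) * M^3)" using M by (intro mult_pos_pos) (auto simp: add_nonneg_pos)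
    ultimately have "d * (2 * (16 * (cmod c + 1) * M^3)) \<le> e"
      by (simp add: pos_le_divide_eq)
    then show ?thesis by (simp add: algebra_simps)
  qed
  show "\<exists>G'. apx G' \<and> (\<forall>x\<in>K. norm (G' x - upd x p (\<alpha> x + c * of_real ((Im (t x))^2))) < e)"
  proof (intro exI conjI ballI)
    show "apx (\<lambda>x. upd x p (\<alpha> x + (c * (-4 / (of_real d)^2)) * (cardioid (1 + of_real d * t x) - 1 - of_real d * t x)))"
      by (rule apx_gdelta[OF sa st ia it])
    fix x assume x: "x \<in> K"
    have tx: "norm (t x) \<le> M" using M(2)[OF x] .
    have "d * cmod (t x) \<le> d * M" using tx d0 by (intro mult_left_mono) auto
    then have ds: "d * cmod (t x) \<le> 1/2" using dM by linarith
    have "norm (upd x p (\<alpha> x + (c * (-4 / (of_real d)^2)) * (cardioid (1 + of_real d * t x) - 1 - of_real d * t x))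
        - upd x p (\<alpha> x + c * of_real ((Im (t x))^2)))
      \<le> norm ((\<alpha> x + (c * (-4 / (of_real d)^2)) * (cardioid (1 + of_real d * t x) - 1 - of_real d * t x))
           - (\<alpha> x + c * of_real ((Im (t x))^2)))"
      by (rule norm_upd_diff)
    also have "\<dots> = norm c * norm (-4 * (cardioid (1 + of_real d * t x) - 1 - of_real d * t x) / (of_real d)^2 - of_real ((Im (t x))^2))"
    proof -
      have "(\<alpha> x + (c * (-4 / (of_real d)^2)) * (cardioid (1 + of_real d * t x) - 1 - of_real d * t x))
           - (\<alpha> x + c * of_real ((Im (t x))^2))
          = c * (-4 * (cardioid (1 + of_real d * t x) - 1 - of_real d * t x) / (of_real d)^2 - of_real ((Im (t x))^2))"
        using gen_id by blast
      then show ?thesis by (simp only: norm_mult)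
    qed
    also have "\<dots> \<le> norm c * (16 * d * (cmod (t x))^3)"
      by (intro mult_left_mono gadget_bound[OF d0 ds]) simp
    also have "\<dots> \<le> (cmod c + 1) * (16 * d * M^3)"
    proof (rule mult_mono)
      show "16 * d * (cmod (t x))^3 \<le> 16 * d * M^3"
        using d0 tx by (intro mult_left_mono power_mono) auto
    qed (use d0 in auto)
    also have "\<dots> < e" using dM2 e by simp
    finally show "norm (upd x p (\<alpha> x + (c * (-4 / (of_real d)^2)) * (cardioid (1 + of_real d * t x) - 1 - of_real d * t x))
        - upd x p (\<alpha> x + c * of_real ((Im (t x))^2))) < e" .
  qed
qed

lemma indep_add: "indep p f \<Longrightarrow> indep p g \<Longrightarrow> indep p (\<lambda>x. f x + g x)"
  by (simp add: indep_def)
lemma indep_mult: "indep p f \<Longrightarrow> indep p (\<lambda>x. c * f x)"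
  by (simp add: indep_def)
lemma indep_const: "indep p (\<lambda>x. c)"
  by (simp add: indep_def)
lemma indep_nth: "k \<noteq> p \<Longrightarrow> indep p (\<lambda>x. x$k)"
  by (simp add: indep_def)

lemma apx_R:
  fixes \<alpha> t :: "complex^'w::finite \<Rightarrow> complex"
  assumes sa: "saff \<alpha>" and st: "saff t" and ia: "indep p \<alpha>" and it: "indep p t"
  shows "apx (\<lambda>x. upd x p (\<alpha> x + c * of_real (Im (t x))))"
proof (rule apx_limit)
  show "continuous_on UNIV (\<lambda>x. upd x p (\<alpha> x + c * of_real (Im (t x))))"
    using saff_cont[OF st] saff_cont[OF sa] by (intro upd_cont continuous_intros)
  fix K :: "(complex^'w) set" and e :: real
  assume K: "compact K" and e: "e > 0"
  obtain M where M: "M > 0" "\<And>x. x \<in> K \<Longrightarrow> norm (t x) \<le> M" using saff_bound[OF st K] by blast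
  define L where "L = cmod c * M^2 / e + 1"
  have "cmod c * M^2 / e \<ge> 0" using e by simp
  then have L0: "L > 0" by (simp add: L_def)
  have LL: "cmod c * M^2 < e * (2 * L)"
  proof -
    have "e * (2 * L) = 2 * (cmod c * M^2) + 2 * e" using e by (simp add: L_def field_simps)
    moreover have "cmod c * M^2 \<ge> 0" by simp
    ultimately show ?thesis using e by linarith
  qed
  define \<alpha>' where "\<alpha>' = (\<lambda>x. \<alpha> x - c * of_real L / 2)"
  define t' where "t' = (\<lambda>x. t x + \<i> * of_real L)"
  define c' where "c' = c / (2 * of_real L)"
  show "\<exists>G'. apx G' \<and> (\<forall>x\<in>K. norm (G' x - upd x p (\<alpha> x + c * of_real (Im (t x)))) < e)"
  proof (intro exI conjI ballI)
    show "apx (\<lambda>x. upd x p (\<alpha>' x + c' * of_real ((Im (t' x))^2)))"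
    proof (rule apx_Q)
      show "saff \<alpha>'" unfolding \<alpha>'_def by (rule saff_diff[OF sa saff_const])
      show "saff t'" unfolding t'_def by (rule saff_add[OF st saff_const])
      show "indep p \<alpha>'" using ia by (simp add: indep_def \<alpha>'_def)
      show "indep p t'" using it by (simp add: indep_def t'_def)
    qed
    fix x assume x: "x \<in> K"
    have tx: "norm (t x) \<le> M" using M(2)[OF x] .
    have I2: "(Im (t x))^2 \<le> M^2"
      using power_mono[OF order_trans[OF abs_Im_le_cmod tx], of 2] by simp
    have eq: "(\<alpha>' x + c' * of_real ((Im (t' x))^2)) - (\<alpha> x + c * of_real (Im (t x)))
       = c * of_real ((Im (t x))^2 / (2 * L))"
    proof -
      have L0': "(of_real L :: complex) \<noteq> 0" using L0 by simp
      have "Im (t' x) = Im (t x) + L" by (simp add: t'_def)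
      then have "(\<alpha>' x + c' * of_real ((Im (t' x))^2)) - (\<alpha> x + c * of_real (Im (t x)))
          = c / (2 * of_real L) * (of_real (Im (t x)) + of_real L)^2 - c * of_real L / 2 - c * of_real (Im (t x))"
        by (simp add: \<alpha>'_def c'_def algebra_simps)
      also have "\<dots> = c * (of_real (Im (t x)))^2 / (2 * of_real L)"
        using L0' by (simp add: field_simps power2_eq_square)
      finally show ?thesis by simp
    qed
    have "norm (upd x p (\<alpha>' x + c' * of_real ((Im (t' x))^2)) - upd x p (\<alpha> x + c * of_real (Im (t x))))
       \<le> norm (c * of_real ((Im (t x))^2 / (2 * L)))"
      using norm_upd_diff[of x p "\<alpha>' x + c' * of_real ((Im (t' x))^2)" "\<alpha> x + c * of_real (Im (t x))"] eq by simp
    also have "\<dots> = cmod c * ((Im (t x))^2 / (2 * L))" unfolding norm_mult norm_of_real using L0 by simp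
    also have "\<dots> \<le> cmod c * (M^2 / (2 * L))"
      using L0 I2 by (intro mult_left_mono divide_right_mono) auto
    also have "\<dots> < e" using LL L0 by (simp add: pos_divide_less_eq)
    finally show "norm (upd x p (\<alpha>' x + c' * of_real ((Im (t' x))^2)) - upd x p (\<alpha> x + c * of_real (Im (t x)))) < e" .
  qed
qed

lemma blin_Im:
  fixes f :: "complex^'n::finite \<Rightarrow> real"
  assumes f: "bounded_linear f"
  shows "\<exists>\<beta>. saff \<beta> \<and> (\<forall>z. f z = Im (\<beta> z))"
proof -
  have lf: "linear f" using f by (rule bounded_linear.linear)
  define e :: "'n \<Rightarrow> complex \<Rightarrow> complex^'n" where "e = (\<lambda>j c. \<chi> k. if k = j then c else 0)"
  have dec: "z = (\<Sum>j\<in>UNIV. Re (z$j) *\<^sub>R e j 1 + Im (z$j) *\<^sub>R e j \<i>)" for z :: "complex^'n"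
  proof (subst vec_eq_iff, intro allI)
    fix k
    have "(\<Sum>j\<in>UNIV. Re (z$j) *\<^sub>R e j 1 + Im (z$j) *\<^sub>R e j \<i>) $ k
        = (\<Sum>j\<in>UNIV. (Re (z$j) *\<^sub>R e j 1 + Im (z$j) *\<^sub>R e j \<i>) $ k)"
      by (rule sum_component)
    also have "\<dots> = (\<Sum>j\<in>UNIV. if j = k then Re (z$j) *\<^sub>R 1 + Im (z$j) *\<^sub>R \<i> else 0)"
      by (rule sum.cong) (auto simp: e_def)
    also have "\<dots> = Re (z$k) *\<^sub>R 1 + Im (z$k) *\<^sub>R \<i>" by simp
    also have "\<dots> = z$k" by (simp add: complex_eq_iff)
    finally show "z $ k = (\<Sum>j\<in>UNIV. Re (z$j) *\<^sub>R e j 1 + Im (z$j) *\<^sub>R e j \<i>) $ k" by simp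
  qed
  define \<beta> where "\<beta> = (\<lambda>z::complex^'n. (\<Sum>j\<in>UNIV. (of_real (f (e j \<i>)) + \<i> * of_real (f (e j 1))) * z$j) + 0)"
  show ?thesis
  proof (intro exI conjI allI)
    show "saff \<beta>" unfolding saff_def \<beta>_def
      by (rule exI[of _ "\<lambda>j. of_real (f (e j \<i>)) + \<i> * of_real (f (e j 1))"], rule exI[of _ 0]) simp
    fix z :: "complex^'n"
    have "f z = f (\<Sum>j\<in>UNIV. Re (z$j) *\<^sub>R e j 1 + Im (z$j) *\<^sub>R e j \<i>)" using dec[of z] by simp
    also have "\<dots> = (\<Sum>j\<in>UNIV. f (Re (z$j) *\<^sub>R e j 1 + Im (z$j) *\<^sub>R e j \<i>))"
      by (rule linear_sum[OF lf])
    also have "\<dots> = (\<Sum>j\<in>UNIV. Re (z$j) * f (e j 1) + Im (z$j) * f (e j \<i>))"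
      by (rule sum.cong) (simp_all add: linear_add[OF lf] linear_scale[OF lf])
    also have "\<dots> = Im (\<beta> z)"
      unfolding \<beta>_def by (simp add: Im_sum) (rule sum.cong; simp add: algebra_simps)
    finally show "f z = Im (\<beta> z)" .
  qed
qed

locale machine =
  fixes mem :: "'n::finite \<Rightarrow> 'w::finite" and a w :: 'w
  assumes a_mem: "a \<notin> range mem" and w_mem: "w \<notin> range mem" and aw: "a \<noteq> w"
begin

definition zof :: "complex^'w \<Rightarrow> complex^'n" where "zof x = (\<chi> j. x $ mem j)"

definition Eop :: "(complex^'n \<Rightarrow> complex) \<Rightarrow> complex^'w \<Rightarrow> complex^'w" where
  "Eop f x = upd (upd x a (x$a + f (zof x))) w 0"

definition inF :: "(complex^'n \<Rightarrow> real) \<Rightarrow> bool" where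
  "inF \<phi> \<longleftrightarrow> continuous_on UNIV \<phi> \<and> (\<forall>c. apx (Eop (\<lambda>z. c * of_real (\<phi> z))))"

lemma zof_upd: "p \<notin> range mem \<Longrightarrow> zof (upd x p c) = zof x"
  unfolding zof_def by (auto simp: vec_eq_iff)

lemma zof_a[simp]: "zof (upd x a c) = zof x" using zof_upd[OF a_mem] .
lemma zof_w[simp]: "zof (upd x w c) = zof x" using zof_upd[OF w_mem] .

lemma saff_zof: "saff \<beta> \<Longrightarrow> saff (\<lambda>x. \<beta> (zof x))"
  unfolding zof_def by (rule saff_comp) (auto intro: saff_nth)

lemma cont_zof: "continuous_on UNIV zof"
  unfolding zof_def by (intro continuous_intros)

lemma indep_zof: "p \<notin> range mem \<Longrightarrow> indep p (\<lambda>x. \<beta> (zof x))"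
  unfolding indep_def by (simp add: zof_upd)

lemma Eop_comp: "Eop g (Eop f x) = Eop (\<lambda>z. f z + g z) x"
  unfolding Eop_def using aw by (simp add: vec_eq_iff)

lemma apx_Eop_comp: "apx (Eop f) \<Longrightarrow> apx (Eop g) \<Longrightarrow> apx (Eop (\<lambda>z. f z + g z))"
  using apx_comp[of "Eop f" "Eop g"] by (simp add: Eop_comp)

lemma apx_upd_aff:
  fixes \<beta> :: "complex^'w \<Rightarrow> complex" and p :: 'w
  assumes "saff \<beta>" shows "apx (\<lambda>x. upd x p (\<beta> x))"
proof (rule apx_affine)
  show "cx_affine (\<lambda>x. upd x p (\<beta> x))" unfolding upd_def
  proof (intro cx_affine_saff)
    fix k show "saff (\<lambda>x::complex^'w. if k = p then \<beta> x else x $ k)"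
      by (cases "k = p") (auto simp: assms saff_nth)
  qed
qed

lemma apx_Eop_zero: "apx (Eop (\<lambda>z. 0))"
proof -
  have "Eop (\<lambda>z. 0) = (\<lambda>x. upd x w 0)" unfolding Eop_def by (auto simp: vec_eq_iff)
  then show ?thesis using apx_upd_aff[OF saff_const] by simp
qed

lemma apx_Eop_rot:
  assumes r: "r \<noteq> 0" and E: "apx (Eop f)"
  shows "apx (Eop (\<lambda>z. f z / r))"
proof -
  have R1: "apx (\<lambda>x. upd x a (r * x$a))" by (rule apx_upd_aff) (intro saff_mult saff_nth)
  have R2: "apx (\<lambda>x. upd x a ((1/r) * x$a))" by (rule apx_upd_aff) (intro saff_mult saff_nth)
  have "apx (\<lambda>x. (\<lambda>x. upd x a ((1/r) * x$a)) (Eop f ((\<lambda>x. upd x a (r * x$a)) x)))"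
    using apx_comp[OF apx_comp[OF R1 E] R2] by simp
  moreover have "(\<lambda>x. (\<lambda>x. upd x a ((1/r) * x$a)) (Eop f ((\<lambda>x. upd x a (r * x$a)) x))) = Eop (\<lambda>z. f z / r)"
    unfolding Eop_def using aw r by (auto simp: vec_eq_iff field_simps)
  ultimately show ?thesis by simp
qed

lemma apx_Eop_lin:
  assumes b: "saff \<beta>"
  shows "apx (Eop (\<lambda>z. c * of_real (Im (\<beta> z))))"
proof -
  have C: "apx (\<lambda>x. upd x w (x$a))" by (rule apx_upd_aff) (rule saff_nth)
  have Z: "apx (\<lambda>x. upd x w 0)" by (rule apx_upd_aff) (rule saff_const)
  have R: "apx (\<lambda>x. upd x a ((\<lambda>y. y$w) x + c * of_real (Im ((\<lambda>y. \<beta> (zof y)) x))))"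
    by (rule apx_R[OF saff_nth saff_zof[OF b] indep_nth[OF aw[symmetric]] indep_zof[OF a_mem]])
  have "apx (\<lambda>x. (\<lambda>x. upd x w 0) ((\<lambda>x. upd x a ((\<lambda>y. y$w) x + c * of_real (Im ((\<lambda>y. \<beta> (zof y)) x)))) ((\<lambda>x. upd x w (x$a)) x)))"
    using apx_comp[OF apx_comp[OF C R] Z] by simp
  moreover have "(\<lambda>x. (\<lambda>x. upd x w 0) ((\<lambda>x. upd x a ((\<lambda>y. y$w) x + c * of_real (Im ((\<lambda>y. \<beta> (zof y)) x)))) ((\<lambda>x. upd x w (x$a)) x)))
     = Eop (\<lambda>z. c * of_real (Im (\<beta> z)))"
    unfolding Eop_def using aw by (auto simp: vec_eq_iff)
  ultimately show ?thesis by simp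
qed

lemma apx_T:
  "apx (\<lambda>x. upd (upd x a (x$a + s * of_real ((Im (x$a))^2))) w 0)"
proof -
  have C: "apx (\<lambda>x. upd x w (x$a))" by (rule apx_upd_aff) (rule saff_nth)
  have Z: "apx (\<lambda>x. upd x w 0)" by (rule apx_upd_aff) (rule saff_const)
  have Q: "apx (\<lambda>x. upd x a ((\<lambda>y. y$w) x + s * of_real ((Im ((\<lambda>y. y$w) x))^2)))"
    by (rule apx_Q[OF saff_nth saff_nth indep_nth[OF aw[symmetric]] indep_nth[OF aw[symmetric]]])
  have "apx (\<lambda>x. (\<lambda>x. upd x w 0) ((\<lambda>x. upd x a ((\<lambda>y. y$w) x + s * of_real ((Im ((\<lambda>y. y$w) x))^2))) ((\<lambda>x. upd x w (x$a)) x)))"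
    using apx_comp[OF apx_comp[OF C Q] Z] by simp
  moreover have "(\<lambda>x. (\<lambda>x. upd x w 0) ((\<lambda>x. upd x a ((\<lambda>y. y$w) x + s * of_real ((Im ((\<lambda>y. y$w) x))^2))) ((\<lambda>x. upd x w (x$a)) x)))
     = (\<lambda>x. upd (upd x a (x$a + s * of_real ((Im (x$a))^2))) w 0)"
    using aw by (auto simp: vec_eq_iff)
  ultimately show ?thesis by simp
qed

lemma Eop_cont: "continuous_on UNIV f \<Longrightarrow> continuous_on UNIV (Eop f)"
proof -
  assume f: "continuous_on UNIV f"
  have "continuous_on UNIV (\<lambda>x. f (zof x))" using continuous_on_compose2[OF f cont_zof] by simp
  then have i: "continuous_on UNIV (\<lambda>x. upd x a (x$a + f (zof x)))"
    by (intro upd_cont continuous_intros) auto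
  have o: "continuous_on UNIV (\<lambda>y::complex^'w. upd y w 0)" by (intro upd_cont continuous_intros)
  show ?thesis unfolding Eop_def using continuous_on_compose2[OF o i] by simp
qed

lemma norm_Eop_diff: "norm (Eop f x - Eop g x) \<le> norm (f (zof x) - g (zof x))"
proof -
  have "norm (Eop f x - Eop g x) \<le> (\<Sum>j\<in>UNIV. norm ((Eop f x - Eop g x)$j))"
    by (rule norm_le_l1_cvec)
  also have "\<dots> = (\<Sum>j\<in>UNIV. if j = a then norm (f (zof x) - g (zof x)) else 0)"
    unfolding Eop_def using aw by (intro sum.cong) auto
  finally show ?thesis by simp
qed

lemma inF_add: "inF \<phi> \<Longrightarrow> inF \<psi> \<Longrightarrow> inF (\<lambda>z. \<phi> z + \<psi> z)"
  unfolding inF_def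
proof (intro conjI allI)
  assume A: "continuous_on UNIV \<phi> \<and> (\<forall>c. apx (Eop (\<lambda>z. c * of_real (\<phi> z))))"
     and B: "continuous_on UNIV \<psi> \<and> (\<forall>c. apx (Eop (\<lambda>z. c * of_real (\<psi> z))))"
  then show "continuous_on UNIV (\<lambda>z. \<phi> z + \<psi> z)" by (intro continuous_intros) auto
  fix c
  have "apx (Eop (\<lambda>z. c * of_real (\<phi> z) + c * of_real (\<psi> z)))"
    using A B by (intro apx_Eop_comp) auto
  then show "apx (Eop (\<lambda>z. c * of_real (\<phi> z + \<psi> z)))" by (simp add: distrib_left)
qed

lemma inF_scale: "inF \<phi> \<Longrightarrow> inF (\<lambda>z. r * \<phi> z)"
  unfolding inF_def
proof (intro conjI allI)
  assume A: "continuous_on UNIV \<phi> \<and> (\<forall>c. apx (Eop (\<lambda>z. c * of_real (\<phi> z))))"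
  then show "continuous_on UNIV (\<lambda>z. r * \<phi> z)" by (intro continuous_intros) auto
  fix c
  have "apx (Eop (\<lambda>z. (c * of_real r) * of_real (\<phi> z)))" using A by blast
  then show "apx (Eop (\<lambda>z. c * of_real (r * \<phi> z)))" by (simp add: mult.assoc)
qed

lemma inF_const: "inF (\<lambda>z. k)"
  unfolding inF_def
proof (intro conjI allI)
  show "continuous_on UNIV (\<lambda>z::complex^'n. k)" by simp
  fix c
  have "apx (Eop (\<lambda>z. c * of_real (Im ((\<lambda>z. \<i> * of_real k) z))))"
    by (rule apx_Eop_lin) (rule saff_const)
  then show "apx (Eop (\<lambda>z. c * of_real k))" by simp
qed

lemma inF_lin:
  assumes b: "saff \<beta>" shows "inF (\<lambda>z. Im (\<beta> z))"
  unfolding inF_def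
proof (intro conjI allI)
  show "continuous_on UNIV (\<lambda>z. Im (\<beta> z))" using saff_cont[OF b] by (intro continuous_intros)
  fix c show "apx (Eop (\<lambda>z. c * of_real (Im (\<beta> z))))" by (rule apx_Eop_lin[OF b])
qed

lemma apx_D:
  assumes "inF \<phi>"
  shows "apx (\<lambda>x. upd (upd x a (x$a + of_real ((Im (x$a) + \<phi> (zof x))^2 - (Im (x$a))^2))) w 0)"
proof -
  have E1: "apx (Eop (\<lambda>z. \<i> * of_real (\<phi> z)))" and E2: "apx (Eop (\<lambda>z. (-\<i>) * of_real (\<phi> z)))"
    using assms unfolding inF_def by blast+
  have T1: "apx (\<lambda>x. upd (upd x a (x$a + 1 * of_real ((Im (x$a))^2))) w 0)" by (rule apx_T)
  have T2: "apx (\<lambda>x. upd (upd x a (x$a + (-1) * of_real ((Im (x$a))^2))) w 0)" by (rule apx_T)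
  have "apx (\<lambda>x. (\<lambda>x. upd (upd x a (x$a + (-1) * of_real ((Im (x$a))^2))) w 0)
            (Eop (\<lambda>z. (-\<i>) * of_real (\<phi> z))
             ((\<lambda>x. upd (upd x a (x$a + 1 * of_real ((Im (x$a))^2))) w 0)
              (Eop (\<lambda>z. \<i> * of_real (\<phi> z)) x))))"
    using apx_comp[OF apx_comp[OF apx_comp[OF E1 T1] E2] T2] by simp
  moreover have "(\<lambda>x. (\<lambda>x. upd (upd x a (x$a + (-1) * of_real ((Im (x$a))^2))) w 0)
            (Eop (\<lambda>z. (-\<i>) * of_real (\<phi> z))
             ((\<lambda>x. upd (upd x a (x$a + 1 * of_real ((Im (x$a))^2))) w 0)
              (Eop (\<lambda>z. \<i> * of_real (\<phi> z)) x))))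
      = (\<lambda>x. upd (upd x a (x$a + of_real ((Im (x$a) + \<phi> (zof x))^2 - (Im (x$a))^2))) w 0)"
    unfolding Eop_def using aw by (auto simp: vec_eq_iff)
  ultimately show ?thesis by simp
qed

lemma inF_sq:
  assumes A: "inF \<phi>" shows "inF (\<lambda>z. (\<phi> z)^2)"
  unfolding inF_def
proof (intro conjI allI)
  show "continuous_on UNIV (\<lambda>z. (\<phi> z)^2)" using A unfolding inF_def by (intro continuous_intros) auto
  have Am: "inF (\<lambda>z. (-1) * \<phi> z)" by (rule inF_scale[OF A])
  have D2: "apx (Eop (\<lambda>z. 2 * of_real ((\<phi> z)^2)))"
  proof -
    have "apx (\<lambda>x. (\<lambda>x. upd (upd x a (x$a + of_real ((Im (x$a) + (-1) * \<phi> (zof x))^2 - (Im (x$a))^2))) w 0)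
                ((\<lambda>x. upd (upd x a (x$a + of_real ((Im (x$a) + \<phi> (zof x))^2 - (Im (x$a))^2))) w 0) x))"
      using apx_comp[OF apx_D[OF A] apx_D[OF Am]] by simp
    moreover have "(\<lambda>x. (\<lambda>x. upd (upd x a (x$a + of_real ((Im (x$a) + (-1) * \<phi> (zof x))^2 - (Im (x$a))^2))) w 0)
                ((\<lambda>x. upd (upd x a (x$a + of_real ((Im (x$a) + \<phi> (zof x))^2 - (Im (x$a))^2))) w 0) x))
       = Eop (\<lambda>z. 2 * of_real ((\<phi> z)^2))"
    proof (rule ext)
      fix x :: "complex^'w"
      define I where "I = Im (x$a)"
      define p where "p = \<phi> (zof x)"
      have r: "((I + p)^2 - I^2) + ((I + (-1) * p)^2 - I^2) = 2 * p^2"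
        by (simp add: power2_eq_square algebra_simps)
      have c0: "(of_real ((I + p)^2 - I^2) :: complex) + of_real ((I + (-1) * p)^2 - I^2) = 2 * of_real (p^2)"
        unfolding of_real_add[symmetric] r by simp
      have c: "x$a + of_real ((I + p)^2 - I^2) + of_real ((I + (-1) * p)^2 - I^2) = x$a + 2 * of_real (p^2)"
        by (simp only: add.assoc c0)
      show "(\<lambda>x. upd (upd x a (x$a + of_real ((Im (x$a) + (-1) * \<phi> (zof x))^2 - (Im (x$a))^2))) w 0)
                ((\<lambda>x. upd (upd x a (x$a + of_real ((Im (x$a) + \<phi> (zof x))^2 - (Im (x$a))^2))) w 0) x)
          = Eop (\<lambda>z. 2 * of_real ((\<phi> z)^2)) x"
        unfolding Eop_def using aw c by (auto simp: vec_eq_iff I_def p_def)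
    qed
    ultimately show ?thesis by simp
  qed
  fix c :: complex
  show "apx (Eop (\<lambda>z. c * of_real ((\<phi> z)^2)))"
  proof (cases "c = 0")
    case True then show ?thesis using apx_Eop_zero by simp
  next
    case False
    have "apx (Eop (\<lambda>z. 2 * of_real ((\<phi> z)^2) / (2 / c)))"
      by (rule apx_Eop_rot[OF _ D2]) (use False in simp)
    moreover have "(\<lambda>z. 2 * of_real ((\<phi> z)^2) / (2 / c)) = (\<lambda>z. c * of_real ((\<phi> z)^2))"
      using False by (simp add: field_simps)
    ultimately show ?thesis by simp
  qed
qed

lemma inF_mult:
  assumes A: "inF \<phi>" and B: "inF \<psi>" shows "inF (\<lambda>z. \<phi> z * \<psi> z)"
proof -
  have "inF (\<lambda>z. (1/2) * (\<phi> z + \<psi> z)^2 + ((-1/2) * (\<phi> z)^2 + (-1/2) * (\<psi> z)^2))"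
    by (intro inF_add inF_scale inF_sq A B)
  moreover have "(\<lambda>z. (1/2) * (\<phi> z + \<psi> z)^2 + ((-1/2) * (\<phi> z)^2 + (-1/2) * (\<psi> z)^2)) = (\<lambda>z. \<phi> z * \<psi> z)"
    by (simp add: power2_eq_square algebra_simps)
  ultimately show ?thesis by simp
qed

lemma inF_limit:
  assumes c: "continuous_on UNIV \<phi>"
    and a: "\<And>K e. compact K \<Longrightarrow> e > 0 \<Longrightarrow> \<exists>\<psi>. inF \<psi> \<and> (\<forall>z\<in>K. \<bar>\<phi> z - \<psi> z\<bar> < e)"
  shows "inF \<phi>"
  unfolding inF_def
proof (intro conjI allI c)
  fix c :: complex
  show "apx (Eop (\<lambda>z. c * of_real (\<phi> z)))"
  proof (rule apx_limit)
    show "continuous_on UNIV (Eop (\<lambda>z. c * of_real (\<phi> z)))"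
      using c by (intro Eop_cont continuous_intros) auto
    fix L :: "(complex^'w) set" and e :: real
    assume L: "compact L" and e: "e > 0"
    have K: "compact (zof ` L)" by (rule compact_continuous_image[OF continuous_on_subset[OF cont_zof] L]) simp
    have e': "e / (cmod c + 1) > 0" using e by (simp add: add_nonneg_pos)
    obtain \<psi> where \<psi>: "inF \<psi>" "\<And>z. z \<in> zof ` L \<Longrightarrow> \<bar>\<phi> z - \<psi> z\<bar> < e / (cmod c + 1)"
      using a[OF K e'] by blast
    show "\<exists>G'. apx G' \<and> (\<forall>x\<in>L. norm (G' x - Eop (\<lambda>z. c * of_real (\<phi> z)) x) < e)"
    proof (intro exI conjI ballI)
      show "apx (Eop (\<lambda>z. c * of_real (\<psi> z)))" using \<psi>(1) unfolding inF_def by blast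
      fix x assume x: "x \<in> L"
      have "norm (Eop (\<lambda>z. c * of_real (\<psi> z)) x - Eop (\<lambda>z. c * of_real (\<phi> z)) x)
          \<le> norm (c * of_real (\<psi> (zof x)) - c * of_real (\<phi> (zof x)))" by (rule norm_Eop_diff)
      also have "\<dots> = cmod c * \<bar>\<phi> (zof x) - \<psi> (zof x)\<bar>"
      proof -
        have "c * of_real (\<psi> (zof x)) - c * of_real (\<phi> (zof x)) = c * of_real (\<psi> (zof x) - \<phi> (zof x))"
          by (simp add: algebra_simps)
        then show ?thesis by (simp only: norm_mult norm_of_real abs_minus_commute)
      qed
      also have "\<dots> \<le> cmod c * (e / (cmod c + 1))"
        using \<psi>(2)[of "zof x"] x by (intro mult_left_mono) auto
      also have "\<dots> < (cmod c + 1) * (e / (cmod c + 1))"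
        using e' by (intro mult_strict_right_mono) auto
      also have "\<dots> = e"
      proof -
        have "cmod c + 1 \<noteq> 0" using norm_ge_zero[of c] by linarith
        then show ?thesis by simp
      qed
      finally show "norm (Eop (\<lambda>z. c * of_real (\<psi> z)) x - Eop (\<lambda>z. c * of_real (\<phi> z)) x) < e" .
    qed
  qed
qed

lemma inF_poly: "real_polynomial_function \<phi> \<Longrightarrow> inF \<phi>"
proof (induction rule: real_polynomial_function.induct)
  case (linear f)
  then obtain \<beta> where "saff \<beta>" "\<And>z. f z = Im (\<beta> z)" using blin_Im by blast
  then have "f = (\<lambda>z. Im (\<beta> z))" by auto
  then show ?case using inF_lin[OF \<open>saff \<beta>\<close>] by simp
next
  case (const c) show ?case by (rule inF_const)
next
  case (add f g) show ?case using add.IH by (rule inF_add)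
next
  case (mult f g) show ?case using mult.IH by (rule inF_mult)
qed

lemma inF_all: "continuous_on UNIV \<phi> \<Longrightarrow> inF \<phi>"
proof (rule inF_limit)
  fix K :: "(complex^'n) set" and e :: real
  assume "continuous_on UNIV \<phi>" "compact K" "e > 0"
  then obtain g where "real_polynomial_function g" "\<And>x. x \<in> K \<Longrightarrow> \<bar>\<phi> x - g x\<bar> < e"
    using Stone_Weierstrass_real_polynomial_function[OF \<open>compact K\<close> continuous_on_subset[OF \<open>continuous_on UNIV \<phi>\<close> subset_UNIV] \<open>e > 0\<close>] by blast
  then show "\<exists>\<psi>. inF \<psi> \<and> (\<forall>z\<in>K. \<bar>\<phi> z - \<psi> z\<bar> < e)" using inF_poly by blast
qed

end

lemma apx_upd_aff':
  fixes \<beta> :: "complex^'w::finite \<Rightarrow> complex" and p :: 'w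
  assumes "saff \<beta>" shows "apx (\<lambda>x. upd x p (\<beta> x))"
proof (rule apx_affine)
  show "cx_affine (\<lambda>x. upd x p (\<beta> x))" unfolding upd_def
  proof (intro cx_affine_saff)
    fix k show "saff (\<lambda>x::complex^'w. if k = p then \<beta> x else x $ k)"
      by (cases "k = p") (auto simp: assms saff_nth)
  qed
qed

lemma (in machine) apx_Eop_complex:
  assumes h: "continuous_on UNIV h"
  shows "apx (Eop h)"
proof -
  have r: "inF (\<lambda>z. Re (h z))" by (rule inF_all) (intro continuous_intros h)
  have i: "inF (\<lambda>z. Im (h z))" by (rule inF_all) (intro continuous_intros h)
  have "apx (Eop (\<lambda>z. 1 * of_real (Re (h z))))" using r unfolding inF_def by blast
  moreover have "apx (Eop (\<lambda>z. \<i> * of_real (Im (h z))))" using i unfolding inF_def by blast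
  ultimately have "apx (Eop (\<lambda>z. 1 * of_real (Re (h z)) + \<i> * of_real (Im (h z))))"
    by (rule apx_Eop_comp)
  moreover have "(\<lambda>z. 1 * of_real (Re (h z)) + \<i> * of_real (Im (h z))) = h"
    by (rule ext) (simp add: complex_eq_iff)
  ultimately show ?thesis by simp
qed

theorem mainTheorem9:
  assumes "CARD('w::finite) = CARD('n::finite) + CARD('m::finite) + 1"
  shows "universal (NN cardioid TYPE('w) :: (complex ^ 'n \<Rightarrow> complex ^ 'm) set)"
proof -
  have "card (UNIV :: 'w set) = card (UNIV :: ('n + 'm) option set)"
    using assms by (simp add: card_UNIV_option card_UNIV_sum)
  then obtain b0 where "bij_betw b0 (UNIV :: ('n + 'm) option set) (UNIV :: 'w set)"
    using finite_same_card_bij[of "UNIV :: ('n + 'm) option set" "UNIV :: 'w set"] by auto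
  then have bb: "bij b0" by (simp add: bij_betw_def)
  define mem :: "'n \<Rightarrow> 'w" where "mem = (\<lambda>j. b0 (Some (Inl j)))"
  define acc :: "'m \<Rightarrow> 'w" where "acc = (\<lambda>i. b0 (Some (Inr i)))"
  define w0 :: 'w where "w0 = b0 None"
  have inj0: "b0 x = b0 y \<longleftrightarrow> x = y" for x y using bb by (auto simp: bij_def inj_eq)
  have acc_mem: "acc i \<notin> range mem" for i by (auto simp: acc_def mem_def inj0)
  have w_mem: "w0 \<notin> range mem" by (auto simp: w0_def mem_def inj0)
  have acc_w: "acc i \<noteq> w0" for i by (simp add: acc_def w0_def inj0)
  have acc_inj: "acc i = acc i' \<longleftrightarrow> i = i'" for i i' by (simp add: acc_def inj0)
  have mem_inj: "mem j = mem j' \<longleftrightarrow> j = j'" for j j' by (simp add: mem_def inj0)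
  interpret M: machine mem "acc i" w0 for i
    by unfold_locales (use acc_mem w_mem acc_w in auto)
  have zof_eq: "M.zof = (\<lambda>x. \<chi> j. x $ mem j)" by (rule ext) (simp add: M.zof_def)
  define b where "b = inv b0"
  have b_b0: "b (b0 x) = x" for x unfolding b_def using bb by (simp add: bij_def inv_f_f)
  show ?thesis unfolding universal_def
  proof (intro allI impI)
    fix g :: "complex^'n \<Rightarrow> complex^'m" and K :: "(complex^'n) set" and \<epsilon> :: real
    assume gKe: "continuous_on UNIV g \<and> compact K \<and> 0 < \<epsilon>"
    then have g: "continuous_on UNIV g" and K: "compact K" and e: "\<epsilon> > 0" by auto
    define zf :: "complex^'w \<Rightarrow> complex^'n" where "zf = (\<lambda>x. \<chi> j. x $ mem j)"
    define MI where "MI = (\<lambda>I x. upd (\<chi> k. x$k + (\<Sum>i\<in>I. if k = acc i then g (zf x) $ i else 0)) w0 0)"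
    have zf_MI: "zf (MI I x) = zf x" for I x
    proof -
      have acc_ne: "mem j \<noteq> acc i" for j i using acc_mem[of i] by (metis rangeI)
      have w_ne: "mem j \<noteq> w0" for j using w_mem by (metis rangeI)
      show ?thesis unfolding MI_def zf_def by (simp add: vec_eq_iff acc_ne w_ne)
    qed
    have MIapx: "apx (MI I)" if "finite I" for I
      using that
    proof (induction rule: finite_induct)
      case empty
      have "MI {} = (\<lambda>x. upd x w0 0)" by (rule ext) (simp add: MI_def vec_eq_iff upd_def)
      then show ?case using apx_upd_aff'[OF saff_const] by simp
    next
      case (insert i I)
      have ci: "continuous_on UNIV (\<lambda>z. g z $ i)" using g by (intro continuous_intros)
      have "apx (\<lambda>x. M.Eop i (\<lambda>z. g z $ i) (MI I x))"
        by (rule apx_comp[OF insert.IH M.apx_Eop_complex[OF ci]])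
      moreover have "(\<lambda>x. M.Eop i (\<lambda>z. g z $ i) (MI I x)) = MI (insert i I)"
      proof (rule ext)
        fix x
        have z: "M.zof (MI I x) = zf x" using zf_MI unfolding zof_eq zf_def by simp
        show "M.Eop i (\<lambda>z. g z $ i) (MI I x) = MI (insert i I) x"
          unfolding M.Eop_def z
          using insert.hyps acc_w
          by (auto simp: vec_eq_iff MI_def acc_inj sum.insert intro!: sum.cong)
      qed
      ultimately show ?case by simp
    qed
    define Mf where "Mf = MI UNIV"
    have aM: "apx Mf" unfolding Mf_def by (rule MIapx) simp
    define Emb :: "complex^'n \<Rightarrow> complex^'w" where
      "Emb = (\<lambda>z. \<chi> k. (case b k of Some (Inl j) \<Rightarrow> z$j | _ \<Rightarrow> 0))"
    define Proj :: "complex^'w \<Rightarrow> complex^'m" where "Proj = (\<lambda>y. \<chi> i. y $ acc i)"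
    have aEmb: "cx_affine Emb" unfolding Emb_def
    proof (intro cx_affine_saff)
      fix k show "saff (\<lambda>z::complex^'n. case b k of Some (Inl j) \<Rightarrow> z$j | _ \<Rightarrow> 0)"
      proof (cases "b k")
        case None then show ?thesis by (simp add: saff_const)
      next
        case (Some s) then show ?thesis by (cases s) (simp_all add: saff_nth saff_const)
      qed
    qed
    have aProj: "cx_affine Proj" unfolding Proj_def by (intro cx_affine_saff saff_nth)
    have zEmb: "zf (Emb z) = z" for z
      by (simp add: zf_def Emb_def vec_eq_iff mem_def b_b0)
    have EmbAcc: "Emb z $ acc i = 0" for z i by (simp add: Emb_def acc_def b_b0)
    have PM: "Proj (Mf (Emb z)) = g z" for z
      by (simp add: Proj_def Mf_def MI_def vec_eq_iff zEmb EmbAcc acc_w acc_inj)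
    have Plin: "Proj u - Proj v = Proj (u - v)" for u v by (simp add: Proj_def vec_eq_iff)
    define N where "N = real CARD('m)"
    have Pn: "norm (Proj u) \<le> N * norm u" for u
    proof -
      have "norm (Proj u) \<le> (\<Sum>i\<in>UNIV. norm (Proj u $ i))" by (rule norm_le_l1_cvec)
      also have "\<dots> \<le> (\<Sum>i\<in>(UNIV::'m set). norm u)"
        by (rule sum_mono) (simp add: Proj_def Finite_Cartesian_Product.norm_nth_le)
      finally show ?thesis by (simp add: N_def)
    qed
    have KE: "compact (Emb ` K)"
      by (rule compact_continuous_image[OF continuous_on_subset[OF cx_affine_cont[OF aEmb]] K]) simp
    have d: "\<epsilon> / (N + 1) > 0" using e by (simp add: N_def add_nonneg_pos)
    then have "\<exists>U (h :: complex^'w \<Rightarrow> complex^'w). cx_affine U \<and> h \<in> nn_hidden cardioid \<and>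
       (\<forall>x\<in>Emb ` K. norm (U (h x) - Mf x) < \<epsilon> / (N + 1))"
      using aM KE unfolding apx_def by blast
    then obtain U and h :: "complex^'w \<Rightarrow> complex^'w" where U: "cx_affine U" and h: "h \<in> nn_hidden cardioid"
      and Uh: "\<And>x. x \<in> Emb ` K \<Longrightarrow> norm (U (h x) - Mf x) < \<epsilon> / (N + 1)" by blast
    show "\<exists>f\<in>(NN cardioid TYPE('w) :: (complex ^ 'n \<Rightarrow> complex ^ 'm) set). \<forall>z\<in>K. norm (f z - g z) < \<epsilon>"
    proof (rule bexI[of _ "\<lambda>z. Proj (U (h (Emb z)))"])
      show "(\<lambda>z. Proj (U (h (Emb z)))) \<in> (NN cardioid TYPE('w) :: (complex ^ 'n \<Rightarrow> complex ^ 'm) set)"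
        unfolding NN_def
        by (rule CollectI, rule exI[of _ "\<lambda>y. Proj (U y)"], rule exI[of _ "\<lambda>z. h (Emb z)"])
           (simp add: aff_comp[OF aProj U] hidden_precomp[OF h aEmb])
      show "\<forall>z\<in>K. norm (Proj (U (h (Emb z))) - g z) < \<epsilon>"
      proof
        fix z assume z: "z \<in> K"
        have "norm (Proj (U (h (Emb z))) - g z) = norm (Proj (U (h (Emb z)) - Mf (Emb z)))"
          by (simp add: PM[symmetric] Plin)
        also have "\<dots> \<le> N * norm (U (h (Emb z)) - Mf (Emb z))" by (rule Pn)
        also have "\<dots> \<le> N * (\<epsilon> / (N + 1))"
          using Uh[of "Emb z"] z by (intro mult_left_mono) (auto simp: N_def)
        also have "\<dots> < (N + 1) * (\<epsilon> / (N + 1))" using d by (intro mult_strict_right_mono) auto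
        also have "\<dots> = \<epsilon>" by (simp add: N_def)
        finally show "norm (Proj (U (h (Emb z))) - g z) < \<epsilon>" .
      qed
    qed
  qed
qed

end
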